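(* For every integer $n\ge4$, $\gamma_{(1,1,0)}^s(P_n)=2\lceil n/3\rceil$.
   Context: $P_n$ is the path on $n$ vertices; $N(v)$ is the open neighbourhood. For a graph $G$, a function $f:V(G)\to\{0,1,2\}$ is a $(1,1,0)$-dominating function if $\sum_{u\in N(v)}f(u)\ge1$ for every vertex $v$ with $f(v)\in\{0,1\}$. For adjacent $v,u$ with $f(v)=0$, $f(u)>0$, $f_{u\to v}$ is defined by $f_{u\to v}(v)=1$, $f_{u\to v}(u)=f(u)-1$, $f_{u\to v}(x)=f(x)$ otherwise. $f$ is a secure $(1,1,0)$-dominating function if it is $(1,1,0)$-dominating and for every $v$ with $f(v)=0$ there is $u\in N(v)$ with $f(u)>0$ such that $f_{u\to v}$ is $(1,1,0)$-dominating. $\gamma_{(1,1,0)}^s(G)$ is the minimum of $\sum_v f(v)$ over secure $(1,1,0)$-dominating functions. *)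

theory Defs
  imports Complex_Main
begin

text \<open>A finite simple graph is given by a vertex set V and a symmetric irreflexive
adjacency relation E.\<close>

definition nbhd :: "'a set \<Rightarrow> ('a \<Rightarrow> 'a \<Rightarrow> bool) \<Rightarrow> 'a \<Rightarrow> 'a set" where
  "nbhd V E v = {u \<in> V. E v u}"

definition labelling :: "'a set \<Rightarrow> ('a \<Rightarrow> nat) \<Rightarrow> bool" where
  "labelling V f \<longleftrightarrow> (\<forall>v\<in>V. f v \<in> {0,1,2}) \<and> (\<forall>v. v \<notin> V \<longrightarrow> f v = 0)"

definition dom110 :: "'a set \<Rightarrow> ('a \<Rightarrow> 'a \<Rightarrow> bool) \<Rightarrow> ('a \<Rightarrow> nat) \<Rightarrow> bool" where
  "dom110 V E f \<longleftrightarrow> labelling V f \<and>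
     (\<forall>v\<in>V. f v \<in> {0,1} \<longrightarrow> (\<Sum>u\<in>nbhd V E v. f u) \<ge> 1)"

definition move :: "('a \<Rightarrow> nat) \<Rightarrow> 'a \<Rightarrow> 'a \<Rightarrow> ('a \<Rightarrow> nat)" where
  "move f u v = (\<lambda>x. if x = v then 1 else if x = u then f u - 1 else f x)"

definition secure_dom110 :: "'a set \<Rightarrow> ('a \<Rightarrow> 'a \<Rightarrow> bool) \<Rightarrow> ('a \<Rightarrow> nat) \<Rightarrow> bool" where
  "secure_dom110 V E f \<longleftrightarrow> dom110 V E f \<and>
     (\<forall>v\<in>V. f v = 0 \<longrightarrow> (\<exists>u\<in>nbhd V E v. f u > 0 \<and> dom110 V E (move f u v)))"

definition gamma_s110 :: "'a set \<Rightarrow> ('a \<Rightarrow> 'a \<Rightarrow> bool) \<Rightarrow> nat" where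
  "gamma_s110 V E = Min {(\<Sum>v\<in>V. f v) | f. secure_dom110 V E f}"

definition path_V :: "nat \<Rightarrow> nat set" where
  "path_V n = {0..<n}"

definition path_E :: "nat \<Rightarrow> nat \<Rightarrow> bool" where
  "path_E i j \<longleftrightarrow> i = j + 1 \<or> j = i + 1"

end

theory Submission
  imports Defs
begin

lemma nbhd_path_sum:
  assumes "v < n"
  shows "(\<Sum>u\<in>nbhd (path_V n) path_E v. (g u::nat)) =
     (if 0 < v then g (v-1) else 0) + (if v+1 < n then g (v+1) else 0)"
proof -
  have e: "nbhd (path_V n) path_E v = (if 0<v then {v-1} else {}) \<union> (if v+1<n then {v+1} else {})"
    using assms by (auto simp: nbhd_def path_V_def path_E_def)
  show ?thesis unfolding e by auto
qed

lemma dom_path: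
  "dom110 (path_V n) path_E g \<longleftrightarrow> labelling (path_V n) g \<and>
    (\<forall>w<n. g w \<le> 1 \<longrightarrow> (0 < w \<and> g (w-1) \<ge> 1) \<or> (w+1 < n \<and> g (w+1) \<ge> 1))"
proof -
  have "(\<forall>v\<in>path_V n. g v \<in> {0,1} \<longrightarrow> (\<Sum>u\<in>nbhd (path_V n) path_E v. g u) \<ge> 1) \<longleftrightarrow>
        (\<forall>w<n. g w \<le> 1 \<longrightarrow> (0 < w \<and> g (w-1) \<ge> 1) \<or> (w+1 < n \<and> g (w+1) \<ge> 1))"
  proof -
    have "\<And>v. v < n \<Longrightarrow> (g v \<in> {0,1} \<longrightarrow> (\<Sum>u\<in>nbhd (path_V n) path_E v. g u) \<ge> 1) \<longleftrightarrow>
       (g v \<le> 1 \<longrightarrow> (0 < v \<and> g (v-1) \<ge> 1) \<or> (v+1 < n \<and> g (v+1) \<ge> 1))"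
      by (simp only: nbhd_path_sum) auto
    then show ?thesis by (auto simp: path_V_def)
  qed
  then show ?thesis unfolding dom110_def by blast
qed

lemma sec_path:
  "secure_dom110 (path_V n) path_E f \<longleftrightarrow> dom110 (path_V n) path_E f \<and>
    (\<forall>v<n. f v = 0 \<longrightarrow> (\<exists>u. ((0 < v \<and> u = v-1) \<or> (v+1 < n \<and> u = v+1)) \<and> f u > 0
        \<and> dom110 (path_V n) path_E (move f u v)))"
proof -
  have "\<And>v u. v < n \<Longrightarrow> u \<in> nbhd (path_V n) path_E v \<longleftrightarrow> ((0 < v \<and> u = v-1) \<or> (v+1 < n \<and> u = v+1))"
    by (auto simp: nbhd_def path_V_def path_E_def)
  then show ?thesis unfolding secure_dom110_def path_V_def by (metis atLeastLessThan_iff zero_le)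
qed

lemma lab_le2: "labelling V f \<Longrightarrow> f v \<le> 2"
  unfolding labelling_def by (cases "v \<in> V") auto

lemma dom_at:
  assumes "dom110 (path_V n) path_E g" "w < n" "g w \<le> 1"
  shows "(0 < w \<and> g (w-1) \<ge> 1) \<or> (w+1 < n \<and> g (w+1) \<ge> 1)"
  using assms unfolding dom_path by blast

lemma sec_at:
  assumes "secure_dom110 (path_V n) path_E f" "v < n" "f v = 0"
  shows "\<exists>u. ((0 < v \<and> u = v-1) \<or> (v+1 < n \<and> u = v+1)) \<and> f u > 0
        \<and> dom110 (path_V n) path_E (move f u v)"
  using assms unfolding sec_path by blast

lemma window:
  assumes s: "secure_dom110 (path_V n) path_E f" and i: "i+2 < n"
  shows "f i + f (i+1) + f (i+2) \<ge> 2"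
proof (rule ccontr)
  assume c: "\<not> ?thesis"
  have d: "dom110 (path_V n) path_E f" using s unfolding secure_dom110_def by blast
  have "f (i+1) = 0"
  proof (rule ccontr)
    assume "f (i+1) \<noteq> 0"
    hence "f (i+1) \<le> 1" using c by linarith
    from dom_at[OF d _ this] i c \<open>f (i+1) \<noteq> 0\<close> show False by simp
  qed
  from sec_at[OF s _ this] i obtain u where u: "(u = i \<or> u = i+2)" "f u > 0"
    and m: "dom110 (path_V n) path_E (move f u (i+1))" by auto
  have "move f u (i+1) (i+1) = 1" by (simp add: move_def)
  from dom_at[OF m, of "i+1"] this i
  have "(move f u (i+1) i \<ge> 1) \<or> (move f u (i+1) (i+2) \<ge> 1)" by auto
  then show False using u c by (auto simp: move_def)
qed

lemma first_pair:
  assumes s: "secure_dom110 (path_V n) path_E f" and n: "2 \<le> n"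
  shows "f 0 + f 1 \<ge> 2"
proof (rule ccontr)
  assume c: "\<not> ?thesis"
  have d: "dom110 (path_V n) path_E f" using s unfolding secure_dom110_def by blast
  have "f 0 = 0"
  proof (rule ccontr)
    assume "f 0 \<noteq> 0"
    hence "f 0 \<le> 1" "f 1 = 0" using c by linarith+
    from dom_at[OF d _ this(1)] this(2) n show False by simp
  qed
  from sec_at[OF s _ this] n obtain u where u: "u = 1" "f u > 0"
    and m: "dom110 (path_V n) path_E (move f u 0)" by auto
  have "move f u 0 0 = 1" by (simp add: move_def)
  from dom_at[OF m, of 0] this n have "move f u 0 1 \<ge> 1" by auto
  then show False using u c by (auto simp: move_def)
qed

lemma last_pair:
  assumes s: "secure_dom110 (path_V n) path_E f" and n: "2 \<le> n"
  shows "f (n-2) + f (n-1) \<ge> 2"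
proof (rule ccontr)
  assume c: "\<not> ?thesis"
  obtain k where k: "n = k + 2" using n by (metis add.commute le_add_diff_inverse)
  have c': "\<not> f k + f (k+1) \<ge> 2" using c k by simp
  have d: "dom110 (path_V n) path_E f" using s unfolding secure_dom110_def by blast
  have "f (k+1) = 0"
  proof (rule ccontr)
    assume "f (k+1) \<noteq> 0"
    hence "f (k+1) \<le> 1" "f k = 0" using c' by linarith+
    from dom_at[OF d _ this(1)] this(2) k show False by simp
  qed
  from sec_at[OF s _ this] k obtain u where u: "u = k" "f u > 0"
    and m: "dom110 (path_V n) path_E (move f u (k+1))" by auto
  have "move f u (k+1) (k+1) = 1" by (simp add: move_def)
  from dom_at[OF m, of "k+1"] this k have "move f u (k+1) k \<ge> 1" by auto
  then show False using u c' by (auto simp: move_def)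
qed

lemma blocks:
  assumes s: "secure_dom110 (path_V n) path_E f"
  shows "a + 3*k \<le> n \<Longrightarrow> 2*k \<le> sum f {a..<a+3*k}"
proof (induction k)
  case 0 then show ?case by simp
next
  case (Suc k)
  have w: "f (a+3*k) + f (a+3*k+1) + f (a+3*k+2) \<ge> 2"
    using window[OF s, of "a+3*k"] Suc.prems by simp
  have e: "a + 3 * Suc k = Suc (Suc (Suc (a + 3*k)))" by simp
  have "sum f {a..<a+3*Suc k} = sum f {a..<a+3*k} + f (a+3*k) + f (a+3*k+1) + f (a+3*k+2)"
    unfolding e by (simp add: sum.atLeastLessThan_Suc)
  then show ?case using Suc w by simp
qed

lemma ceil3: "nat \<lceil>real n / 3\<rceil> = (n+2) div 3"
proof -
  obtain q r where n: "n = 3*q + r" and r: "r < 3"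
    by (rule that[of "n div 3" "n mod 3"]) auto
  have "\<lceil>real n / 3\<rceil> = int ((n+2) div 3)"
  proof (cases "r = 0")
    case True then show ?thesis using n by (simp add: ceiling_eq_iff)
  next
    case False
    then have "(n+2) div 3 = q + 1" using n r by auto
    moreover have "real q < real n / 3" "real n / 3 \<le> real q + 1" using n r False by auto
    ultimately show ?thesis by (simp add: ceiling_eq_iff)
  qed
  then show ?thesis by simp
qed

lemma lower:
  assumes s: "secure_dom110 (path_V n) path_E f" and n: "4 \<le> n"
  shows "2 * ((n+2) div 3) \<le> sum f {0..<n}"
proof -
  obtain q r where nq: "n = 3*q + r" and r: "r < 3"
    by (rule that[of "n div 3" "n mod 3"]) auto
  have split: "\<And>a b c. a \<le> b \<Longrightarrow> b \<le> c \<Longrightarrow> sum f {a..<c} = sum f {a..<b} + sum f {b..<c}"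
    by (simp add: sum.atLeastLessThan_concat)
  have fp: "f 0 + f 1 \<ge> 2" using first_pair[OF s] n by simp
  have lp: "f (n-2) + f (n-1) \<ge> 2" using last_pair[OF s] n by simp
  have p0: "sum f {0..<2} = f 0 + f 1" by (simp add: numeral_2_eq_2)
  have pl: "sum f {n-2..<n} = f (n-2) + f (n-1)"
  proof -
    have "{n-2..<n} = {n-2, n-1}" using n by auto
    then show ?thesis using n by simp
  qed
  consider "r = 0" | "r = 1" | "r = 2" using r by linarith
  then show ?thesis
  proof cases
    case 1
    have "(3*q+2) div 3 = q" by simp
    then show ?thesis using blocks[OF s, of 0 q] nq 1 by simp
  next
    case 2
    have q: "q \<ge> 1" using n nq 2 by simp
    have b: "2*(q-1) \<le> sum f {2..<2+3*(q-1)}" using blocks[OF s, of 2 "q-1"] nq 2 q by simp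
    have e: "2+3*(q-1) = n-2" using nq 2 q by simp
    have "sum f {0..<n} = sum f {0..<2} + sum f {2..<n-2} + sum f {n-2..<n}"
      using split[of 0 2 n] split[of 2 "n-2" n] n by simp
    note tot = this
    have B: "2*(q-1) \<le> sum f {2..<n-2}" using b[unfolded e] .
    have A: "2 \<le> sum f {0..<2}" using p0 fp by simp
    have C: "2 \<le> sum f {n-2..<n}" using pl lp by simp
    have "2 + 2*(q-1) + 2 \<le> sum f {0..<2} + sum f {2..<n-2} + sum f {n-2..<n}"
      by (intro add_mono A B C)
    moreover have "2 * ((n+2) div 3) = 2 + 2*(q-1) + 2" using nq 2 q by simp
    ultimately show ?thesis using tot by simp
  next
    case 3
    have b: "2*q \<le> sum f {2..<2+3*q}" using blocks[OF s, of 2 q] nq 3 by simp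
    have "sum f {0..<n} = sum f {0..<2} + sum f {2..<n}"
      using split[of 0 2 n] n by simp
    then show ?thesis using b p0 fp nq 3 by (simp add: add.commute)
  qed
qed

lemma move_dom:
  assumes d: "dom110 (path_V n) path_E f" and u: "u < n" "f u = 2"
    and v: "v < n" "u = v + 1 \<or> v = u + 1"
  shows "dom110 (path_V n) path_E (move f u v)"
proof -
  let ?g = "move f u v"
  have uv: "u \<noteq> v" using v by auto
  have lab: "labelling (path_V n) f" using d unfolding dom110_def by blast
  have lab': "labelling (path_V n) ?g"
    using lab u v unfolding labelling_def move_def path_V_def by auto
  have mono: "\<And>x. f x \<ge> 1 \<Longrightarrow> ?g x \<ge> 1" using u by (auto simp: move_def)
  have "\<And>w. w < n \<Longrightarrow> ?g w \<le> 1 \<Longrightarrow> (0 < w \<and> ?g (w-1) \<ge> 1) \<or> (w+1 < n \<and> ?g (w+1) \<ge> 1)"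
  proof -
    fix w assume w: "w < n" "?g w \<le> 1"
    show "(0 < w \<and> ?g (w-1) \<ge> 1) \<or> (w+1 < n \<and> ?g (w+1) \<ge> 1)"
    proof (cases "w = v \<or> w = u")
      case True
      then show ?thesis using v u uv by (auto simp: move_def)
    next
      case False
      then have "f w \<le> 1" using w by (simp add: move_def)
      from dom_at[OF d w(1) this] mono show ?thesis by blast
    qed
  qed
  then show ?thesis unfolding dom_path using lab' by blast
qed

definition F :: "nat \<Rightarrow> nat \<Rightarrow> nat" where
  "F n i = (if i < n \<and> (i mod 3 = 1 \<or> (i + 1 = n \<and> i mod 3 = 0)) then 2 else 0)"

lemma F_dom: "dom110 (path_V n) path_E (F n)"
proof -
  have lab: "labelling (path_V n) (F n)" unfolding labelling_def F_def path_V_def by auto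
  have "\<And>w. w < n \<Longrightarrow> F n w \<le> 1 \<Longrightarrow> (0 < w \<and> F n (w-1) \<ge> 1) \<or> (w+1 < n \<and> F n (w+1) \<ge> 1)"
  proof -
    fix w assume w: "w < n" "F n w \<le> 1"
    have h1: "w mod 3 \<noteq> 1"
    proof
      assume "w mod 3 = 1" then have "F n w = 2" using w(1) by (simp add: F_def)
      then show False using w(2) by simp
    qed
    have h2: "\<not> (w + 1 = n \<and> w mod 3 = 0)"
    proof
      assume "w + 1 = n \<and> w mod 3 = 0" then have "F n w = 2" using w(1) by (simp add: F_def)
      then show False using w(2) by simp
    qed
    have "w mod 3 < 3" by simp
    then consider "w mod 3 = 0" | "w mod 3 = 2" using h1 by linarith
    then show "(0 < w \<and> F n (w-1) \<ge> 1) \<or> (w+1 < n \<and> F n (w+1) \<ge> 1)"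
    proof cases
      case 1
      have "w + 1 < n" using h2 1 w(1) by linarith
      moreover have "(w+1) mod 3 = 1" using 1 by (simp add: mod_Suc)
      ultimately have "F n (w+1) = 2" by (simp add: F_def)
      then show ?thesis using \<open>w + 1 < n\<close> by simp
    next
      case 2
      have "0 < w" using 2 by (cases w) auto
      moreover have "(w-1) mod 3 = 1" using 2 \<open>0 < w\<close> by (cases w) (auto simp: mod_Suc split: if_splits)
      ultimately have "F n (w-1) = 2" using w(1) by (simp add: F_def)
      then show ?thesis using \<open>0 < w\<close> by simp
    qed
  qed
  then show ?thesis unfolding dom_path using lab by blast
qed

lemma F_sec: "secure_dom110 (path_V n) path_E (F n)"
  unfolding sec_path
proof (intro conjI allI impI F_dom)
  fix v assume v: "v < n" "F n v = 0"
  from dom_at[OF F_dom v(1)] v have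
    "(0 < v \<and> F n (v-1) \<ge> 1) \<or> (v+1 < n \<and> F n (v+1) \<ge> 1)" by simp
  then show "\<exists>u. (0 < v \<and> u = v - 1 \<or> v + 1 < n \<and> u = v + 1) \<and> 0 < F n u \<and>
              dom110 (path_V n) path_E (move (F n) u v)"
  proof
    assume a: "0 < v \<and> F n (v-1) \<ge> 1"
    then have "F n (v-1) = 2" "v - 1 < n" using v unfolding F_def by (auto split: if_splits)
    then show ?thesis using a v move_dom[OF F_dom[of n], where u="v-1" and v=v] by auto
  next
    assume a: "v+1 < n \<and> F n (v+1) \<ge> 1"
    then have "F n (v+1) = 2" unfolding F_def by (auto split: if_splits)
    then show ?thesis using a v move_dom[OF F_dom[of n], where u="v+1" and v=v] by auto
  qed
qed

lemma G_sum: "sum (\<lambda>i. if i mod 3 = 1 then 2 else 0) {0..<3*q} = (2::nat)*q"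
proof (induction q)
  case 0 then show ?case by simp
next
  case (Suc q)
  have e: "3 * Suc q = Suc (Suc (Suc (3*q)))" by simp
  have "(3*q) mod 3 = 0" "(Suc (3*q)) mod 3 = 1" "(Suc (Suc (3*q))) mod 3 = 2" by (simp_all add: mod_Suc)
  then show ?case unfolding e using Suc by (simp add: sum.atLeastLessThan_Suc)
qed

lemma F_sum: "sum (F n) {0..<n} = 2 * ((n+2) div 3)"
proof -
  obtain q r where nq: "n = 3*q + r" and r: "r < 3"
    by (rule that[of "n div 3" "n mod 3"]) auto
  have a: "sum (F n) {0..<3*q} = 2*q"
  proof -
    have "sum (F n) {0..<3*q} = sum (\<lambda>i. if i mod 3 = 1 then 2 else 0) {0..<3*q}"
    proof (rule sum.cong)
      fix i assume i: "i \<in> {0..<3*q}"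
      show "F n i = (if i mod 3 = 1 then 2 else 0)"
      proof (cases "i + 1 = n \<and> i mod 3 = 0")
        case True
        have "i < 3*q" using i by simp
        then have "i + 1 = 3*q" using True nq r by linarith
        then have "(i+1) mod 3 = 0" by simp
        moreover have "(i+1) mod 3 = 1" using conjunct2[OF True] by (simp add: mod_Suc)
        ultimately have False by simp
        then show ?thesis by simp
      next
        case False then show ?thesis using i nq unfolding F_def by auto
      qed
    qed simp
    then show ?thesis using G_sum by simp
  qed
  have m0: "(3*q) mod 3 = 0" "(Suc (3*q)) mod 3 = 1" by (simp_all add: mod_Suc)
  consider "r = 0" | "r = 1" | "r = 2" using r by linarith
  then show ?thesis
  proof cases
    case 1 then show ?thesis using a nq by simp
  next
    case 2
    have "sum (F n) {0..<n} = sum (F n) {0..<3*q} + F n (3*q)" using nq 2 by simp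
    moreover have "F n (3*q) = 2" using nq 2 m0 unfolding F_def by simp
    ultimately show ?thesis using a nq 2 by simp
  next
    case 3
    have "sum (F n) {0..<n} = sum (F n) {0..<3*q} + F n (3*q) + F n (Suc (3*q))" using nq 3 by simp
    moreover have "F n (3*q) = 0" "F n (Suc (3*q)) = 2" using nq 3 m0 unfolding F_def by auto
    ultimately show ?thesis using a nq 3 by simp
  qed
qed

theorem proposition23:
  fixes n :: nat
  assumes "n \<ge> 4"
  shows "gamma_s110 (path_V n) path_E = 2 * nat \<lceil>real n / 3\<rceil>"
  unfolding gamma_s110_def ceil3
proof (rule Min_eqI)
  have "{(\<Sum>v\<in>path_V n. f v) |f. secure_dom110 (path_V n) path_E f} \<subseteq> {..2*n}"
  proof
    fix x assume "x \<in> {(\<Sum>v\<in>path_V n. f v) |f. secure_dom110 (path_V n) path_E f}"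
    then obtain f where x: "x = (\<Sum>v\<in>path_V n. f v)" and s: "secure_dom110 (path_V n) path_E f" by blast
    have lab: "labelling (path_V n) f" using s unfolding secure_dom110_def dom110_def by blast
    have "(\<Sum>v\<in>path_V n. f v) \<le> (\<Sum>v\<in>path_V n. 2)" by (rule sum_mono) (rule lab_le2[OF lab])
    then show "x \<in> {..2*n}" using x by (simp add: path_V_def)
  qed
  then show "finite {(\<Sum>v\<in>path_V n. f v) |f. secure_dom110 (path_V n) path_E f}"
    using finite_subset by blast
next
  fix y assume "y \<in> {(\<Sum>v\<in>path_V n. f v) |f. secure_dom110 (path_V n) path_E f}"
  then obtain f where y: "y = (\<Sum>v\<in>path_V n. f v)" and s: "secure_dom110 (path_V n) path_E f" by blast
  show "2 * ((n+2) div 3) \<le> y" using lower[OF s assms] y by (simp add: path_V_def)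
next
  show "2 * ((n+2) div 3) \<in> {(\<Sum>v\<in>path_V n. f v) |f. secure_dom110 (path_V n) path_E f}"
    using F_sec[of n] F_sum[of n] unfolding path_V_def by (metis (mono_tags, lifting) mem_Collect_eq)
qed

end
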